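(* Let $\mu>0$, $\tau>0$, and real numbers $\theta_0,u_0,\theta^\ast$ with $\theta_0\neq u_0$ satisfying $\mu\tau=\dfrac{\theta^\ast-\theta_0}{\theta_0-u_0}$. Consider the system $$\dot u=-\mu(u-\theta),\qquad \dot\theta=-\eta(t)\,(u-\theta^\ast),\qquad u(0)=u_0,\ \theta(0)=\theta_0,$$ on $[0,\tau]$ with the learning rate schedule $\eta(t)=\dfrac{1}{\tau-t+1/\mu}$. Then, with $m=\mu(\theta_0-u_0)$, the solution is $u(t)=u_0+mt$ and $\theta(t)=\frac{m}{\mu}+u_0+mt$ for $t\in[0,\tau]$; in particular $\ddot u\equiv 0$ (the sample centre of mass moves at constant speed) and $\theta(\tau)=\theta^\ast$.
   Context: This is the harmonic trap energy-based model: energy $E(x,\theta)=\frac12(x-\theta)^2$ on $\mathbb{R}$, model distribution Gaussian with mean $\theta$ and variance $\beta^{-1}$, data distribution Gaussian with mean $\theta^\ast$. Here $u(t)$ is the mean of the sample distribution evolving under overdamped Langevin dynamics with mobility $\mu$, and $\theta(t)$ is updated by the approximate maximum-likelihood gradient flow with time-dependent learning rate $\eta(t)$. The excess work of the process is $\int_0^\tau(\theta-u)\dot\theta\,dt=\frac12(\dot u/\mu)^2\big|_0^\tau+\frac1\mu\int_0^\tau\dot u^2\,dt$, whose integral part is minimized by $\ddot u=0$. *)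

theory Defs
  imports "HOL-Analysis.Analysis"
begin

end

theory Submission
  imports Defs
begin


lemma gron_zero:
  fixes V V' :: "real \<Rightarrow> real" and C T :: real
  assumes C: "C \<ge> 0" and nn: "\<And>t. t \<in> {0..T} \<Longrightarrow> V t \<ge> 0" and V0: "V 0 = 0"
    and D: "\<And>t. t \<in> {0..T} \<Longrightarrow> (V has_real_derivative V' t) (at t within {0..T})"
    and B: "\<And>t. t \<in> {0..T} \<Longrightarrow> V' t \<le> C * V t"
    and t: "t \<in> {0..T}"
  shows "V t = 0"
proof -
  define W where "W s = exp (- (C * s)) * V s" for s
  have DW: "(W has_real_derivative (exp (- (C * s)) * V' s - C * exp (- (C * s)) * V s)) (at s within {0..T})"
    if "s \<in> {0..T}" for s
  proof -
    have "((\<lambda>s. exp (- (C * s))) has_real_derivative (exp (- (C * s)) * (- C))) (at s within {0..T})"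
      by (auto intro!: derivative_eq_intros)
    from DERIV_mult[OF this D[OF that]] show ?thesis
      unfolding W_def by (simp add: algebra_simps)
  qed
  have cont: "continuous_on {0..T} W" by (rule DERIV_continuous_on, rule DW)
  have "W t \<le> W 0"
  proof (rule DERIV_nonpos_imp_decreasing_open[of 0 t W])
    show "0 \<le> t" using t by auto
    show "continuous_on {0..t} W" using cont t by (auto intro: continuous_on_subset)
    fix x assume x: "0 < x" "x < t"
    then have xi: "x \<in> {0..T}" using t by auto
    have "at x within {0..T} = at x" using x t by (intro at_within_Icc_at) auto
    then have "(W has_real_derivative (exp (- (C * x)) * V' x - C * exp (- (C * x)) * V x)) (at x)"
      using DW[OF xi] by simp
    moreover have "exp (- (C * x)) * V' x - C * exp (- (C * x)) * V x \<le> 0"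
    proof -
      have "exp (- (C * x)) * V' x \<le> exp (- (C * x)) * (C * V x)"
        using B[OF xi] by (intro mult_left_mono) auto
      then show ?thesis by (simp add: algebra_simps)
    qed
    ultimately show "\<exists>y. DERIV W x :> y \<and> y \<le> 0" by blast
  qed
  then have "exp (- (C * t)) * V t \<le> 0" using V0 by (simp add: W_def)
  moreover have "exp (- (C * t)) > 0" by simp
  ultimately have "V t \<le> 0" by (simp add: mult_le_0_iff)
  with nn[OF t] show ?thesis by simp
qed

theorem mainTheorem2:
  fixes \<mu> \<tau> \<theta>0 u0 \<theta>s :: real
  assumes "\<mu> > 0" and "\<tau> > 0" and "\<theta>0 \<noteq> u0"
    and "\<mu> * \<tau> = (\<theta>s - \<theta>0) / (\<theta>0 - u0)"
  defines "\<eta> \<equiv> (\<lambda>t. 1 / (\<tau> - t + 1 / \<mu>))"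
    and "m \<equiv> \<mu> * (\<theta>0 - u0)"
  shows "(\<forall>t\<in>{0..\<tau>}.
            ((\<lambda>t. u0 + m * t) has_real_derivative
               - \<mu> * ((u0 + m * t) - (m / \<mu> + u0 + m * t))) (at t within {0..\<tau>})
          \<and> ((\<lambda>t. m / \<mu> + u0 + m * t) has_real_derivative
               - \<eta> t * ((u0 + m * t) - \<theta>s)) (at t within {0..\<tau>}))
       \<and> (\<forall>u \<theta> :: real \<Rightarrow> real.
            u 0 = u0 \<and> \<theta> 0 = \<theta>0 \<and>
            (\<forall>t\<in>{0..\<tau>}.
               (u has_real_derivative - \<mu> * (u t - \<theta> t)) (at t within {0..\<tau>})
             \<and> (\<theta> has_real_derivative - \<eta> t * (u t - \<theta>s)) (at t within {0..\<tau>}))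
            \<longrightarrow> (\<forall>t\<in>{0..\<tau>}. u t = u0 + m * t \<and> \<theta> t = m / \<mu> + u0 + m * t
                   \<and> (u has_real_derivative m) (at t within {0..\<tau>}))
              \<and> \<theta> \<tau> = \<theta>s)"
  proof -
  have mu: "\<mu> > 0" by fact
  have th: "\<theta>s = \<theta>0 + \<mu> * \<tau> * (\<theta>0 - u0)" using assms(3,4) by (simp add: field_simps)
  have eta: "\<eta> t > 0 \<and> \<eta> t \<le> \<mu>" if "t \<in> {0..\<tau>}" for t
  proof -
    have p: "\<tau> - t + 1/\<mu> \<ge> 1/\<mu>" "1/\<mu> > 0" using that mu by auto
    have q: "\<tau> - t + 1/\<mu> > 0" using p by linarith
    have r: "1 \<le> \<mu> * (\<tau> - t + 1/\<mu>)" using mu that by (simp add: algebra_simps)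
    have le: "1 / (\<tau> - t + 1/\<mu>) \<le> \<mu>" using q r by (simp add: pos_divide_le_eq mult.commute)
    show ?thesis unfolding \<eta>_def by (intro conjI divide_pos_pos zero_less_one q le)
  qed
  have key: "- \<eta> t * ((u0 + m * t) - \<theta>s) = m" if "t \<in> {0..\<tau>}" for t
  proof -
    have "(u0 + m * t) - \<theta>s = - m * (\<tau> - t + 1/\<mu>)"
      unfolding th m_def using mu by (simp add: field_simps)
    moreover have "\<tau> - t + 1/\<mu> > 0" using that mu by (auto intro: add_nonneg_pos)
    ultimately show ?thesis unfolding \<eta>_def by (simp add: divide_simps)
  qed
  have part1: "\<forall>t\<in>{0..\<tau>}.
            ((\<lambda>t. u0 + m * t) has_real_derivative
               - \<mu> * ((u0 + m * t) - (m / \<mu> + u0 + m * t))) (at t within {0..\<tau>})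
          \<and> ((\<lambda>t. m / \<mu> + u0 + m * t) has_real_derivative
               - \<eta> t * ((u0 + m * t) - \<theta>s)) (at t within {0..\<tau>})"
  proof
    fix t assume t: "t \<in> {0..\<tau>}"
    have "- \<mu> * ((u0 + m * t) - (m / \<mu> + u0 + m * t)) = m" using mu by simp
    then show "((\<lambda>t. u0 + m * t) has_real_derivative
               - \<mu> * ((u0 + m * t) - (m / \<mu> + u0 + m * t))) (at t within {0..\<tau>})
          \<and> ((\<lambda>t. m / \<mu> + u0 + m * t) has_real_derivative
               - \<eta> t * ((u0 + m * t) - \<theta>s)) (at t within {0..\<tau>})"
      unfolding key[OF t] by (auto intro!: derivative_eq_intros)
  qed
  have part2: "(\<forall>t\<in>{0..\<tau>}. u t = u0 + m * t \<and> \<theta> t = m / \<mu> + u0 + m * t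
                   \<and> (u has_real_derivative m) (at t within {0..\<tau>}))
              \<and> \<theta> \<tau> = \<theta>s"
    if H: "u 0 = u0 \<and> \<theta> 0 = \<theta>0 \<and>
            (\<forall>t\<in>{0..\<tau>}.
               (u has_real_derivative - \<mu> * (u t - \<theta> t)) (at t within {0..\<tau>})
             \<and> (\<theta> has_real_derivative - \<eta> t * (u t - \<theta>s)) (at t within {0..\<tau>}))" for u \<theta>
  proof -
    define d where "d t = u t - (u0 + m * t)" for t
    define e where "e t = \<theta> t - (m / \<mu> + u0 + m * t)" for t
    have Dd: "(d has_real_derivative - \<mu> * (d t - e t)) (at t within {0..\<tau>})" if t: "t \<in> {0..\<tau>}" for t
    proof -
      have "(d has_real_derivative - \<mu> * (u t - \<theta> t) - m) (at t within {0..\<tau>})"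
        unfolding d_def[abs_def] using H t by (auto intro!: derivative_eq_intros)
      moreover have "- \<mu> * (u t - \<theta> t) - m = - \<mu> * (d t - e t)"
        unfolding d_def e_def using mu by (simp add: field_simps)
      ultimately show ?thesis by simp
    qed
    have De: "(e has_real_derivative - \<eta> t * d t) (at t within {0..\<tau>})" if t: "t \<in> {0..\<tau>}" for t
    proof -
      have "(e has_real_derivative - \<eta> t * (u t - \<theta>s) - m) (at t within {0..\<tau>})"
        unfolding e_def[abs_def] using H t by (auto intro!: derivative_eq_intros)
      moreover have "- \<eta> t * (u t - \<theta>s) - m = - \<eta> t * d t + (- \<eta> t * ((u0 + m * t) - \<theta>s) - m)"
        unfolding d_def by (simp add: algebra_simps)
      ultimately show ?thesis using key[OF t] by simp
    qed
    define V where "V t = (d t)\<^sup>2 + (e t)\<^sup>2" for t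
    define V' where "V' t = 2 * d t * (- \<mu> * (d t - e t)) + 2 * e t * (- \<eta> t * d t)" for t
    have DV: "(V has_real_derivative V' t) (at t within {0..\<tau>})" if t: "t \<in> {0..\<tau>}" for t
    proof -
      have "((\<lambda>t. (d t)\<^sup>2 + (e t)\<^sup>2) has_real_derivative V' t) (at t within {0..\<tau>})"
      proof -
        have A: "((\<lambda>t. (d t)^2) has_real_derivative (of_nat 2 * ((- \<mu> * (d t - e t)) * d t ^ (2 - Suc 0)))) (at t within {0..\<tau>})"
          by (rule DERIV_power[OF Dd[OF t]])
        have B: "((\<lambda>t. (e t)^2) has_real_derivative (of_nat 2 * ((- \<eta> t * d t) * e t ^ (2 - Suc 0)))) (at t within {0..\<tau>})"
          by (rule DERIV_power[OF De[OF t]])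
        from DERIV_add[OF A B] show ?thesis unfolding V'_def by (simp add: algebra_simps)
      qed
      then show ?thesis unfolding V_def[abs_def] .
    qed
    have BV: "V' t \<le> (2*\<mu>) * V t" if t: "t \<in> {0..\<tau>}" for t
    proof -
      have V'e: "V' t = -2*\<mu>*(d t)\<^sup>2 + 2*(\<mu> - \<eta> t) * (d t * e t)"
        unfolding V'_def by (simp add: algebra_simps power2_eq_square)
      have a: "2 * \<bar>d t * e t\<bar> \<le> (d t)\<^sup>2 + (e t)\<^sup>2"
      proof -
        have "0 \<le> (\<bar>d t\<bar> - \<bar>e t\<bar>)^2" by simp
        then have "2 * (\<bar>d t\<bar> * \<bar>e t\<bar>) \<le> \<bar>d t\<bar>^2 + \<bar>e t\<bar>^2"
          unfolding power2_diff by linarith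
        then show ?thesis by (simp only: abs_mult power2_abs)
      qed
      have b: "0 \<le> \<mu> - \<eta> t" "\<mu> - \<eta> t \<le> \<mu>" using eta[OF t] by auto
      have "2*(\<mu> - \<eta> t) * (d t * e t) \<le> (\<mu> - \<eta> t) * (2 * \<bar>d t * e t\<bar>)"
      proof -
        have "(\<mu> - \<eta> t) * (2 * (d t * e t)) \<le> (\<mu> - \<eta> t) * (2 * \<bar>d t * e t\<bar>)"
          by (rule mult_left_mono) (use b in auto)
        moreover have "2*(\<mu> - \<eta> t) * (d t * e t) = (\<mu> - \<eta> t) * (2 * (d t * e t))" by simp
        ultimately show ?thesis by linarith
      qed
      also have "\<dots> \<le> (\<mu> - \<eta> t) * ((d t)\<^sup>2 + (e t)\<^sup>2)" using a b by (intro mult_left_mono) auto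
      also have "\<dots> \<le> \<mu> * ((d t)\<^sup>2 + (e t)\<^sup>2)" using b by (intro mult_right_mono) auto
      finally have c: "2*(\<mu> - \<eta> t) * (d t * e t) \<le> \<mu> * ((d t)\<^sup>2 + (e t)\<^sup>2)" .
      have "-2*\<mu>*(d t)\<^sup>2 \<le> 0" using mu by simp
      moreover have "\<mu> * ((d t)\<^sup>2 + (e t)\<^sup>2) \<le> 2*\<mu> * ((d t)\<^sup>2 + (e t)\<^sup>2)" using mu by simp
      ultimately show ?thesis using c unfolding V'e V_def by linarith
    qed
    have V0: "V 0 = 0" unfolding V_def d_def e_def using H mu by (simp add: m_def)
    have nnV: "\<And>s. s \<in> {0..\<tau>} \<Longrightarrow> 0 \<le> V s" unfolding V_def by simp
    have Vz: "V t = 0" if "t \<in> {0..\<tau>}" for t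
      by (rule gron_zero[OF _ nnV V0 DV BV that]) (use mu in simp)
    have de: "d t = 0 \<and> e t = 0" if "t \<in> {0..\<tau>}" for t
      using Vz[OF that] unfolding V_def by (simp add: add_nonneg_eq_0_iff)
    have ue: "u t = u0 + m * t \<and> \<theta> t = m / \<mu> + u0 + m * t" if "t \<in> {0..\<tau>}" for t
      using de[OF that] unfolding d_def e_def by simp
    show ?thesis
    proof (intro conjI ballI)
      fix t assume t: "t \<in> {0..\<tau>}"
      show "u t = u0 + m * t" "\<theta> t = m / \<mu> + u0 + m * t" using ue[OF t] by auto
      have "- \<mu> * (u t - \<theta> t) = m" using ue[OF t] mu by simp
      then show "(u has_real_derivative m) (at t within {0..\<tau>})" using H t by metis
    next
      have "\<tau> \<in> {0..\<tau>}" using assms(2) by simp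
      from ue[OF this] show "\<theta> \<tau> = \<theta>s" unfolding th m_def using mu by (simp add: field_simps)
    qed
  qed
  show ?thesis using part1 part2 by blast
qed

end
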